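(* Let $p,q$ be positive integers with $p\ge 2q$. The graph $K_{p/q}$ admits an orientation without alternating odd cycles if and only if $p/q\le 3$.
   Context: The rational complete graph $K_{p/q}$ has vertex set $\{0,1,\dots,p-1\}$, with $a,b$ adjacent iff $q\le|a-b|\le p-q$. An orientation assigns each edge exactly one direction. In an oriented graph, a subgraph that is a cycle is called alternating if at most one of its vertices has both positive in-degree and positive out-degree within that cycle; an alternating odd cycle is an alternating cycle of odd length. *)

theory Defs
  imports Complex_Main
begin

text \<open>Rational complete graph K_{p/q}: vertices 0..p-1, a and b adjacent iff
  q \<le> |a-b| \<le> p-q.\<close>
definition rcg_adj :: "nat \<Rightarrow> nat \<Rightarrow> nat \<Rightarrow> nat \<Rightarrow> bool" where
  "rcg_adj p q a b \<longleftrightarrow> a < p \<and> b < p \<and>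
     int q \<le> \<bar>int a - int b\<bar> \<and> \<bar>int a - int b\<bar> \<le> int p - int q"

definition is_orientation :: "nat \<Rightarrow> nat \<Rightarrow> (nat \<Rightarrow> nat \<Rightarrow> bool) \<Rightarrow> bool" where
  "is_orientation p q D \<longleftrightarrow>
     (\<forall>a b. D a b \<longrightarrow> rcg_adj p q a b) \<and>
     (\<forall>a b. rcg_adj p q a b \<longrightarrow> (D a b \<longleftrightarrow> \<not> D b a))"

definition is_cycle :: "nat \<Rightarrow> nat \<Rightarrow> nat list \<Rightarrow> bool" where
  "is_cycle p q cs \<longleftrightarrow> length cs \<ge> 3 \<and> distinct cs \<and>
     (\<forall>i < length cs. rcg_adj p q (cs ! i) (cs ! ((i + 1) mod length cs)))"

definition cycle_edge :: "nat list \<Rightarrow> nat \<Rightarrow> nat \<Rightarrow> bool" where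
  "cycle_edge cs u v \<longleftrightarrow> (\<exists>i < length cs.
     (u = cs ! i \<and> v = cs ! ((i + 1) mod length cs)) \<or>
     (v = cs ! i \<and> u = cs ! ((i + 1) mod length cs)))"

definition cyc_indeg :: "(nat \<Rightarrow> nat \<Rightarrow> bool) \<Rightarrow> nat list \<Rightarrow> nat \<Rightarrow> nat" where
  "cyc_indeg D cs v = card {u \<in> set cs. cycle_edge cs u v \<and> D u v}"

definition cyc_outdeg :: "(nat \<Rightarrow> nat \<Rightarrow> bool) \<Rightarrow> nat list \<Rightarrow> nat \<Rightarrow> nat" where
  "cyc_outdeg D cs v = card {u \<in> set cs. cycle_edge cs v u \<and> D v u}"

definition alternating :: "(nat \<Rightarrow> nat \<Rightarrow> bool) \<Rightarrow> nat list \<Rightarrow> bool" where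
  "alternating D cs \<longleftrightarrow>
     card {v \<in> set cs. cyc_indeg D cs v > 0 \<and> cyc_outdeg D cs v > 0} \<le> 1"

definition alternating_odd_cycle :: "nat \<Rightarrow> nat \<Rightarrow> (nat \<Rightarrow> nat \<Rightarrow> bool) \<Rightarrow> nat list \<Rightarrow> bool" where
  "alternating_odd_cycle p q D cs \<longleftrightarrow> is_cycle p q cs \<and> odd (length cs) \<and> alternating D cs"

end

theory Submission
  imports Defs
begin

lemma ce_sym: "cycle_edge cs u v = cycle_edge cs v u"
  unfolding cycle_edge_def by auto

lemma ce3: "cycle_edge [a,b,c] u v \<longleftrightarrow>
  (u=a \<and> v=b) \<or> (u=b \<and> v=a) \<or> (u=b \<and> v=c) \<or> (u=c \<and> v=b) \<or> (u=c \<and> v=a) \<or> (u=a \<and> v=c)"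
  unfolding cycle_edge_def by (simp add: Ex_less_Suc2) blast
lemma ce5: "cycle_edge [a,b,c,d,e] u v \<longleftrightarrow>
  (u=a \<and> v=b) \<or> (u=b \<and> v=a) \<or> (u=b \<and> v=c) \<or> (u=c \<and> v=b) \<or> (u=c \<and> v=d) \<or> (u=d \<and> v=c)
  \<or> (u=d \<and> v=e) \<or> (u=e \<and> v=d) \<or> (u=e \<and> v=a) \<or> (u=a \<and> v=e)"
  unfolding cycle_edge_def by (simp add: Ex_less_Suc2) blast
lemma cyc3: "is_cycle p q [a,b,c] \<longleftrightarrow> distinct [a,b,c] \<and> rcg_adj p q a b \<and> rcg_adj p q b c \<and> rcg_adj p q c a"
  unfolding is_cycle_def by (simp add: All_less_Suc2)
lemma cyc5: "is_cycle p q [a,b,c,d,e] \<longleftrightarrow> distinct [a,b,c,d,e] \<and> rcg_adj p q a b \<and> rcg_adj p q b c \<and> rcg_adj p q c d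
   \<and> rcg_adj p q d e \<and> rcg_adj p q e a"
  unfolding is_cycle_def by (simp add: All_less_Suc2)

lemma alt_crit:
  assumes "\<forall>v\<in>set cs. v \<noteq> b \<longrightarrow> (\<forall>u. cycle_edge cs u v \<longrightarrow> \<not> D u v) \<or> (\<forall>u. cycle_edge cs v u \<longrightarrow> \<not> D v u)"
  shows "alternating D cs"
proof -
  have "{v \<in> set cs. cyc_indeg D cs v > 0 \<and> cyc_outdeg D cs v > 0} \<subseteq> {b}"
  proof
    fix v assume v: "v \<in> {v \<in> set cs. cyc_indeg D cs v > 0 \<and> cyc_outdeg D cs v > 0}"
    show "v \<in> {b}"
    proof (rule ccontr)
      assume "v \<notin> {b}"
      with v assms have "(\<forall>u. cycle_edge cs u v \<longrightarrow> \<not> D u v) \<or> (\<forall>u. cycle_edge cs v u \<longrightarrow> \<not> D v u)" by auto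
      then have "cyc_indeg D cs v = 0 \<or> cyc_outdeg D cs v = 0"
        unfolding cyc_indeg_def cyc_outdeg_def by auto
      with v show False by auto
    qed
  qed
  then have "card {v \<in> set cs. cyc_indeg D cs v > 0 \<and> cyc_outdeg D cs v > 0} \<le> card {b}"
    by (intro card_mono) auto
  then show ?thesis unfolding alternating_def by simp
qed

lemma orient_anti: "is_orientation p q D \<Longrightarrow> D a b \<Longrightarrow> \<not> D b a"
  unfolding is_orientation_def by blast

lemma orient_tot: "is_orientation p q D \<Longrightarrow> rcg_adj p q a b \<Longrightarrow> D a b \<or> D b a"
  unfolding is_orientation_def by blast

lemma tri_alt:
  assumes o: "is_orientation p q D" and d: "distinct [a,b,c]"
    and adj: "rcg_adj p q a b" "rcg_adj p q b c" "rcg_adj p q c a"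
    and D: "D a b" "D b c" "D a c"
  shows "alternating_odd_cycle p q D [a,b,c]"
proof -
  have n: "\<not> D b a" "\<not> D c b" "\<not> D c a" using D orient_anti[OF o] by blast+
  have "alternating D [a,b,c]"
  proof (rule alt_crit[where b=b], intro ballI impI)
    fix v assume "v \<in> set [a,b,c]" "v \<noteq> b"
    then have "v = a \<or> v = c" by auto
    then show "(\<forall>u. cycle_edge [a,b,c] u v \<longrightarrow> \<not> D u v) \<or> (\<forall>u. cycle_edge [a,b,c] v u \<longrightarrow> \<not> D v u)"
    proof
      assume "v = a" then show ?thesis using n d by (auto simp: ce3)
    next
      assume "v = c" then show ?thesis using n d by (auto simp: ce3)
    qed
  qed
  then show ?thesis unfolding alternating_odd_cycle_def using d adj by (simp add: cyc3)
qed

lemma pent_alt: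
  assumes o: "is_orientation p q D" and d: "distinct [a,b,c,d,e]"
    and adj: "rcg_adj p q a b" "rcg_adj p q b c" "rcg_adj p q c d" "rcg_adj p q d e" "rcg_adj p q e a"
    and D: "D a b" "D b c" "D d c" "D d e" "D a e"
  shows "alternating_odd_cycle p q D [a,b,c,d,e]"
proof -
  have n: "\<not> D b a" "\<not> D c b" "\<not> D c d" "\<not> D e d" "\<not> D e a" using D orient_anti[OF o] by blast+
  have "alternating D [a,b,c,d,e]"
  proof (rule alt_crit[where b=b], intro ballI impI)
    fix v assume "v \<in> set [a,b,c,d,e]" "v \<noteq> b"
    then have "v = a \<or> v = c \<or> v = d \<or> v = e" by auto
    then show "(\<forall>u. cycle_edge [a,b,c,d,e] u v \<longrightarrow> \<not> D u v) \<or> (\<forall>u. cycle_edge [a,b,c,d,e] v u \<longrightarrow> \<not> D v u)"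
      apply (elim disjE)
      subgoal using n d by (auto simp: ce5)
      subgoal using n d by (auto simp: ce5)
      subgoal using n d by (auto simp: ce5)
      subgoal using n d by (auto simp: ce5)
      done
  qed
  then show ?thesis unfolding alternating_odd_cycle_def using d adj by (simp add: cyc5)
qed


lemma modeq_cases:
  fixes P x i j :: nat
  assumes "P > 0" "i \<le> j" "j - i < P"
  shows "(x+j) mod P = (x+i) mod P + (j - i) \<or> (x+j) mod P + P = (x+i) mod P + (j - i)"
proof -
  define a where "a = (x+i) mod P"
  define d where "d = j - i"
  have a: "a < P" using assms by (auto simp: a_def)
  have "x + j = (x+i) + d" using assms by (simp add: d_def)
  then have "(x+j) mod P = ((x+i) + d) mod P" by (rule arg_cong[where f="\<lambda>t. t mod P"])
  also have "\<dots> = (a + d) mod P" by (simp add: a_def mod_add_left_eq)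
  finally have "(x+j) mod P = (a + d) mod P" .
  moreover have "(a + d) mod P = (if a + d < P then a + d else a + d - P)"
    using a assms by (simp add: mod_if d_def)
  ultimately show ?thesis using a by (auto simp: a_def d_def split: if_splits)
qed

lemma adjV:
  fixes P x i j :: nat
  assumes "P = 3*q+1" "P \<le> p" "i \<le> j" "q \<le> j - i" "j - i \<le> 2*q+1" "q > 0"
  shows "rcg_adj p q ((x+i) mod P) ((x+j) mod P)"
proof -
  have P0: "P > 0" using assms by simp
  have lt: "j - i < P" using assms(1,5,6) by linarith
  have m: "(x+i) mod P < P" "(x+j) mod P < P" using P0 by auto
  from modeq_cases[OF P0 assms(3) lt]
  show ?thesis
  proof
    assume h: "(x+j) mod P = (x+i) mod P + (j - i)"
    show ?thesis unfolding rcg_adj_def using m assms h by linarith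
  next
    assume h: "(x+j) mod P + P = (x+i) mod P + (j - i)"
    show ?thesis unfolding rcg_adj_def using m assms h by linarith
  qed
qed

lemma distV:
  fixes P x i j :: nat
  assumes "i < j" "j < P"
  shows "(x+i) mod P \<noteq> (x+j) mod P"
proof -
  have P0: "P > 0" using assms by simp
  have "j - i < P" "i \<le> j" using assms by auto
  from modeq_cases[OF P0 this(2) this(1), of x] 
  show ?thesis using assms by (elim disjE) linarith+
qed

lemma adj_sym: "rcg_adj p q a b = rcg_adj p q b a"
  unfolding rcg_adj_def by auto

definition md :: "nat \<Rightarrow> nat \<Rightarrow> nat \<Rightarrow> nat" where
  "md P x k = (x + k) mod P"

lemma md_shift: "md P (x+i) j = md P x (i+j)"
  unfolding md_def by (simp add: add.assoc)

lemma md_cong: "i = j \<Longrightarrow> md P x i = md P x j" by simp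

lemma md_P: "md P x P = md P x 0"
  unfolding md_def by simp

lemma adjM:
  assumes "P = 3*q+1" "P \<le> p" "q > 0" "i \<le> j" "q \<le> j - i" "j - i \<le> 2*q+1"
  shows "rcg_adj p q (md P x i) (md P x j)"
  unfolding md_def using adjV[of P q p i j x] assms by simp

lemma distM:
  assumes "i < j" "j < P"
  shows "md P x i \<noteq> md P x j"
  unfolding md_def using distV[OF assms] .

lemma no_trans:
  assumes o: "is_orientation p q D" and NA: "\<not> (\<exists>cs. alternating_odd_cycle p q D cs)"
    and d: "distinct [a,b,c]"
    and adj: "rcg_adj p q a b" "rcg_adj p q b c" "rcg_adj p q c a"
  shows "\<not> (D a b \<and> D b c \<and> D a c)"
  using tri_alt[OF o d adj] NA by blast

lemma tri_cyc:
  assumes o: "is_orientation p q D" and NA: "\<not> (\<exists>cs. alternating_odd_cycle p q D cs)"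
    and d: "distinct [a,b,c]"
    and adj: "rcg_adj p q a b" "rcg_adj p q b c" "rcg_adj p q c a"
  shows "(D a b \<longleftrightarrow> D b c) \<and> (D b c \<longleftrightarrow> D c a)"
proof -
  have adj': "rcg_adj p q b a" "rcg_adj p q c b" "rcg_adj p q a c" using adj adj_sym by metis+
  have d': "distinct [b,c,a]" "distinct [c,a,b]" "distinct [a,c,b]" "distinct [c,b,a]" "distinct [b,a,c]"
    using d by auto
  note nt = no_trans[OF o NA d adj] no_trans[OF o NA d'(1) adj(2,3,1)] no_trans[OF o NA d'(2) adj(3,1,2)]
     no_trans[OF o NA d'(3) adj'(3,2,1)] no_trans[OF o NA d'(4) adj'(2,1,3)] no_trans[OF o NA d'(5) adj'(1,3,2)]
  have t: "D a b \<or> D b a" "D b c \<or> D c b" "D c a \<or> D a c"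
    using orient_tot[OF o] adj by blast+
  have an: "D a b \<Longrightarrow> \<not> D b a" "D b c \<Longrightarrow> \<not> D c b" "D c a \<Longrightarrow> \<not> D a c"
    using orient_anti[OF o] by blast+
  show ?thesis using nt t an by blast
qed

lemma core:
  assumes o: "is_orientation p q D" and NA: "\<not> (\<exists>cs. alternating_odd_cycle p q D cs)"
    and q: "q > 0" and P: "P = 3*q+1" "P \<le> p"
    and H: "\<And>x. D (md P x 0) (md P x q)"
  shows False
proof -
  note adj = adjM[OF P q]
  have B: "D (md P x (2*q)) (md P x 0)" for x
  proof -
    have d: "distinct [md P x 0, md P x q, md P x (2*q)]"
      using distM[of 0 q P x] distM[of q "2*q" P x] distM[of 0 "2*q" P x] q P by auto
    have a1: "rcg_adj p q (md P x 0) (md P x q)" by (rule adj) (use q in auto)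
    have a2: "rcg_adj p q (md P x q) (md P x (2*q))" by (rule adj) (use q in auto)
    have a3: "rcg_adj p q (md P x (2*q)) (md P x 0)" by (subst adj_sym, rule adj) (use q in auto)
    have "D (md P x q) (md P x (2*q))"
      using H[of "x+q"] by (simp add: md_shift mult_2)
    then show ?thesis using tri_cyc[OF o NA d a1 a2 a3] by blast
  qed
  have base: "D (md P x 0) (md P x (q+1))" for x
  proof -
    have "D (md P (x+(q+1)) (2*q)) (md P (x+(q+1)) 0)" by (rule B)
    moreover have "md P (x+(q+1)) (2*q) = md P x 0"
      unfolding md_shift using md_P[of P x] P by (simp add: add.commute)
    moreover have "md P (x+(q+1)) 0 = md P x (q+1)" unfolding md_shift by simp
    ultimately show ?thesis by simp
  qed
  have ind: "k + 1 \<le> q \<Longrightarrow> D (md P x 0) (md P x (q+1+k))" for k x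
  proof (induction k arbitrary: x)
    case 0
    then show ?case using base by simp
  next
    case (Suc k)
    define m where "m = q+1+k"
    have IH: "D (md P y 0) (md P y m)" for y using Suc m_def by simp
    have mb: "q+1 \<le> m" "m+1 \<le> 2*q" using Suc m_def by auto
    define a where "a = md P x (q+1)"
    define b where "b = md P x (2*q+1)"
    define c where "c = md P x 0"
    define d where "d = md P x (m+1)"
    define e where "e = md P x (q+m+1)"
    have c': "c = md P x (3*q+1)" using md_P[of P x] P c_def by simp
    have Dab: "D a b" using H[of "x+(q+1)"] unfolding a_def b_def md_shift
      by (simp add: mult_2)
    have Dbc: "D b c" using H[of "x+(2*q+1)"] unfolding b_def c' md_shift
      by (simp add: add.commute add.left_commute)
    have Dde: "D d e" using H[of "x+(m+1)"] unfolding d_def e_def md_shift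
      by (simp add: add.commute add.left_commute)
    have Dae: "D a e" using IH[of "x+(q+1)"] unfolding a_def e_def md_shift
      by (simp add: add.commute add.left_commute)
    have dist: "distinct [a,b,c,d,e]"
      unfolding a_def b_def c_def d_def e_def
      using distM[of 0 "q+1" P x] distM[of 0 "2*q+1" P x] distM[of 0 "m+1" P x] distM[of 0 "q+m+1" P x]
        distM[of "q+1" "2*q+1" P x] distM[of "q+1" "m+1" P x] distM[of "q+1" "q+m+1" P x]
        distM[of "m+1" "2*q+1" P x] distM[of "2*q+1" "q+m+1" P x] distM[of "m+1" "q+m+1" P x]
        mb P by auto
    have aab: "rcg_adj p q a b" unfolding a_def b_def by (rule adj) auto
    have abc: "rcg_adj p q b c" unfolding b_def c' by (rule adj) auto
    have acd: "rcg_adj p q c d" unfolding c_def d_def by (rule adj) (use mb in auto)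
    have ade: "rcg_adj p q d e" unfolding d_def e_def by (rule adj) (use mb in auto)
    have aea: "rcg_adj p q e a" unfolding e_def a_def by (subst adj_sym, rule adj) (use mb in auto)
    have "\<not> D d c"
    proof
      assume "D d c"
      from pent_alt[OF o dist aab abc acd ade aea Dab Dbc this Dde Dae] NA show False by blast
    qed
    then have "D c d" using orient_tot[OF o acd] by blast
    then show ?case unfolding c_def d_def m_def by (simp add: add.commute add.left_commute)
  qed
  have "D (md P 0 0) (md P 0 (2*q))" using ind[of "q - 1" 0] q
    by (metis Suc_diff_1 Suc_eq_plus1 add.commute le_refl mult_2 add.assoc)
  moreover have "D (md P 0 (2*q)) (md P 0 0)" by (rule B)
  ultimately show False using orient_anti[OF o] by blast
qed


lemma odd_chain:
  fixes g :: "nat \<Rightarrow> nat" and n j :: nat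
  assumes n: "odd n" and n3: "n \<ge> 3" and jn: "j < n"
    and per: "\<And>k. g (k+n) = g k"
    and link: "\<And>m. m mod n \<noteq> j \<Longrightarrow> g (m+n-1) = g (m+1)"
    and adjd: "\<And>k. g k \<noteq> g (k+1)"
  shows False
proof -
  define h where "h = (n+1) div 2"
  have h2: "2*h = n+1" using n by (simp add: h_def)
  have st: "s \<le> h \<Longrightarrow> g (j+1+2*s) = g (j+1)" for s
  proof (induction s)
    case 0 then show ?case by simp
  next
    case (Suc s)
    define m where "m = j+2+2*s"
    have ne: "m mod n \<noteq> j"
    proof
      assume mj: "m mod n = j"
      have e: "m div n * n + j = m" using div_mult_mod_eq[of m n] mj by simp
      define t where "t = m div n"
      have e2: "t * n + j = m" using e t_def by simp
      have t': "2*s+2 = n * t" using e2 m_def by (simp add: mult.commute)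
      have le: "2*s+2 \<le> n+1" using Suc h2 by simp
      have "t \<noteq> 0" proof assume "t = 0" with t' show False by simp qed
      moreover have "\<not> t \<ge> 2"
      proof
        assume "t \<ge> 2"
        then have "n * 2 \<le> n * t" by (rule mult_le_mono2)
        with t' le n3 show False by linarith
      qed
      ultimately have "t = 1" by simp
      then have "n = 2*(s+1)" using t' by simp
      then show False using n by simp
    qed
    have "g (j+1+2*Suc s) = g (m+1)" by (simp add: m_def)
    also have "\<dots> = g (m+n-1)" using link[OF ne] by simp
    also have "m+n-1 = (j+1+2*s) + n" by (simp add: m_def)
    also have "g \<dots> = g (j+1+2*s)" by (rule per)
    also have "\<dots> = g (j+1)" using Suc by simp
    finally show ?case .
  qed
  have "g (j+1+2*h) = g (j+1)" by (rule st) simp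
  moreover have "j+1+2*h = (j+2)+n" using h2 by simp
  ultimately have "g (j+2) = g (j+1)" using per by metis
  then show False using adjd[of "j+1"] by simp
qed

lemma c3: "(x::nat) < 3 \<Longrightarrow> x = 0 \<or> x = 1 \<or> x = 2" by arith
lemma mod3a: assumes "(x::nat) < 3" "y < 3" "x \<noteq> y" shows "(y = (x+1) mod 3) = (x \<noteq> (y+1) mod 3)"
  using c3[OF assms(1)] c3[OF assms(2)] assms(3) by (elim disjE) simp_all
lemma mod3b: assumes "(x::nat) < 3" "y < 3" "(x+1) mod 3 = (y+1) mod 3" shows "x = y"
  using c3[OF assms(1)] c3[OF assms(2)] assms(3) by (elim disjE) simp_all
lemma col_ne:
  assumes "p \<le> 3*q" "rcg_adj p q a b"
  shows "3*a div p \<noteq> 3*b div p"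
proof
  assume eq: "3*a div p = 3*b div p"
  have ab: "a < p" "b < p" "int q \<le> \<bar>int a - int b\<bar>" using assms unfolding rcg_adj_def by auto
  then have p0: "p > 0" by simp
  have ma: "3*a div p * p + 3*a mod p = 3*a" by (rule div_mult_mod_eq)
  have mb: "3*a div p * p + 3*b mod p = 3*b" using div_mult_mod_eq[of "3*b" p] eq by simp
  have "3*a mod p < p" "3*b mod p < p" using p0 by auto
  moreover have "int q \<le> int b - int a \<or> int q \<le> int a - int b" using ab(3) by (auto simp: abs_if split: if_splits)
  then have "q + a \<le> b \<or> q + b \<le> a" by linarith
  ultimately show False using ma mb assms(1) by (elim disjE) linarith+
qed

lemma if_dir:
  fixes p q :: nat
  assumes q: "q > 0" and pq: "p \<le> 3*q"
  shows "\<exists>D. is_orientation p q D \<and> \<not> (\<exists>cs. alternating_odd_cycle p q D cs)"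
proof -
  define col where "col = (\<lambda>a::nat. 3*a div p)"
  define D where "D = (\<lambda>a b. rcg_adj p q a b \<and> col b = (col a + 1) mod 3)"
  have collt: "a < p \<Longrightarrow> col a < 3" for a
    unfolding col_def by (rule less_mult_imp_div_less) simp
  have colne: "rcg_adj p q a b \<Longrightarrow> col a \<noteq> col b" for a b
    unfolding col_def using col_ne[OF pq] by blast
  have adjlt: "rcg_adj p q a b \<Longrightarrow> a < p \<and> b < p" for a b unfolding rcg_adj_def by simp
  have o: "is_orientation p q D"
    unfolding is_orientation_def
  proof (intro conjI allI impI)
    fix a b assume "D a b" then show "rcg_adj p q a b" unfolding D_def by simp
  next
    fix a b assume ab: "rcg_adj p q a b"
    then have ba: "rcg_adj p q b a" using adj_sym by metis
    show "D a b = (\<not> D b a)" unfolding D_def using ab ba mod3a[OF collt collt colne[OF ab]] adjlt[OF ab] by blast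
  qed
  have tot: "rcg_adj p q a b \<Longrightarrow> D a b \<or> D b a" for a b
    using o unfolding is_orientation_def by blast
  have noalt: False if A: "alternating_odd_cycle p q D cs" for cs
  proof -
    define n where "n = length cs"
    have cyc: "is_cycle p q cs" and odd: "odd n" and alt: "alternating D cs"
      using A unfolding alternating_odd_cycle_def n_def by auto
    have n3: "n \<ge> 3" and dist: "distinct cs"
      and cadj: "\<And>i. i < n \<Longrightarrow> rcg_adj p q (cs!i) (cs!((i+1) mod n))"
      using cyc unfolding is_cycle_def n_def by auto
    define g where "g = (\<lambda>k. col (cs ! (k mod n)))"
    have per: "g (k+n) = g k" for k unfolding g_def by simp
    have adjd: "g k \<noteq> g (k+1)" for k
    proof -
      have "k mod n < n" using n3 by simp
      from cadj[OF this] have "rcg_adj p q (cs!(k mod n)) (cs!((k+1) mod n))"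
        by (simp add: mod_Suc_eq)
      then show ?thesis unfolding g_def using colne by simp
    qed
    define S where "S = {v \<in> set cs. cyc_indeg D cs v > 0 \<and> cyc_outdeg D cs v > 0}"
    have cS: "card S \<le> 1" using alt unfolding alternating_def S_def by simp
    have fS: "finite S" unfolding S_def by simp
    have uniq: "u \<in> S \<Longrightarrow> v \<in> S \<Longrightarrow> u = v" for u v
      using cS fS by (metis One_nat_def card_le_Suc0_iff_eq)
    obtain j where jn: "j < n" and jj: "\<And>i. i < n \<Longrightarrow> i \<noteq> j \<Longrightarrow> cs ! i \<notin> S"
    proof (cases "\<exists>i<n. cs ! i \<in> S")
      case True
      then obtain j where j: "j < n" "cs ! j \<in> S" by blast
      show ?thesis
      proof (rule that[OF j(1)])
        fix i assume i: "i < n" "i \<noteq> j"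
        show "cs ! i \<notin> S"
        proof
          assume "cs ! i \<in> S"
          with j uniq have "cs ! i = cs ! j" by blast
          with i j dist show False by (simp add: nth_eq_iff_index_eq n_def)
        qed
      qed
    next
      case False
      then show ?thesis using that[of 0] n3 by auto
    qed
    have link: "g (m+n-1) = g (m+1)" if mj: "m mod n \<noteq> j" for m
    proof -
      define i where "i = m mod n"
      define pi where "pi = (m+n-1) mod n"
      define si where "si = (m+1) mod n"
      have n0: "n > 0" using n3 by simp
      have ilt: "i < n" "pi < n" "si < n" using n0 by (auto simp: i_def pi_def si_def)
      have pis: "(pi + 1) mod n = i"
      proof -
        have "(pi + 1) mod n = (m+n-1+1) mod n" unfolding pi_def by (simp add: mod_Suc_eq)
        also have "m+n-1+1 = m + n" using n0 by simp
        finally show ?thesis by (simp add: i_def)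
      qed
      have sis: "(i + 1) mod n = si" unfolding i_def si_def by (simp add: mod_Suc_eq)
      have inS: "cs ! i \<notin> S" using jj[OF ilt(1)] mj by (simp add: i_def)
      have inset: "cs ! pi \<in> set cs" "cs ! si \<in> set cs" "cs ! i \<in> set cs" using ilt by (auto simp: n_def)
      have ce1: "cycle_edge cs (cs ! pi) (cs ! i)" unfolding cycle_edge_def using ilt pis
        by (auto simp: n_def)
      have ce2: "cycle_edge cs (cs ! i) (cs ! si)" unfolding cycle_edge_def using ilt sis
        by (auto simp: n_def)
      have ad1: "rcg_adj p q (cs ! pi) (cs ! i)" using cadj[OF ilt(2)] pis by simp
      have ad2: "rcg_adj p q (cs ! i) (cs ! si)" using cadj[OF ilt(1)] sis by simp
      have ad1': "rcg_adj p q (cs ! i) (cs ! pi)" using ad1 adj_sym by metis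
      have c3: "col (cs!pi) < 3" "col (cs!si) < 3" "col (cs!i) < 3"
        using adjlt[OF ad1] adjlt[OF ad2] collt by auto
      have "cyc_indeg D cs (cs!i) = 0 \<or> cyc_outdeg D cs (cs!i) = 0"
        using inS inset unfolding S_def by auto
      then have "col (cs!pi) = col (cs!si)"
      proof
        assume "cyc_indeg D cs (cs!i) = 0"
        then have "{u \<in> set cs. cycle_edge cs u (cs!i) \<and> D u (cs!i)} = {}"
          unfolding cyc_indeg_def by simp
        then have "\<not> D (cs!pi) (cs!i)" "\<not> D (cs!si) (cs!i)" using inset ce1 ce2 ce_sym by blast+
        then have "D (cs!i) (cs!pi)" "D (cs!i) (cs!si)" using tot ad1 ad2 by blast+
        then show ?thesis unfolding D_def by simp
      next
        assume "cyc_outdeg D cs (cs!i) = 0"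
        then have "{u \<in> set cs. cycle_edge cs (cs!i) u \<and> D (cs!i) u} = {}"
          unfolding cyc_outdeg_def by simp
        then have "\<not> D (cs!i) (cs!pi)" "\<not> D (cs!i) (cs!si)" using inset ce1 ce2 ce_sym by blast+
        then have "D (cs!pi) (cs!i)" "D (cs!si) (cs!i)" using tot ad1' ad2 by blast+
        then have "(col (cs!pi) + 1) mod 3 = (col (cs!si) + 1) mod 3" unfolding D_def by simp
        then show ?thesis using mod3b c3 by blast
      qed
      then show ?thesis unfolding g_def pi_def si_def by simp
    qed
    show False by (rule odd_chain[OF odd n3 jn per link adjd])
  qed
  show ?thesis using o noalt by blast
qed

lemma triM:
  assumes o: "is_orientation p q D" and NA: "\<not> (\<exists>cs. alternating_odd_cycle p q D cs)"
    and q: "q > 0" and P: "P = 3*q+1" "P \<le> p"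
  shows "D (md P x 0) (md P x q) \<longleftrightarrow> D (md P x q) (md P x (2*q))"
proof -
  note adj = adjM[OF P q]
  have d: "distinct [md P x 0, md P x q, md P x (2*q)]"
    using distM[of 0 q P x] distM[of q "2*q" P x] distM[of 0 "2*q" P x] q P by auto
  have a1: "rcg_adj p q (md P x 0) (md P x q)" by (rule adj) (use q in auto)
  have a2: "rcg_adj p q (md P x q) (md P x (2*q))" by (rule adj) (use q in auto)
  have a3: "rcg_adj p q (md P x (2*q)) (md P x 0)" by (subst adj_sym, rule adj) (use q in auto)
  show ?thesis using tri_cyc[OF o NA d a1 a2 a3] by blast
qed

lemma alt_conv: "alternating (\<lambda>a b. D b a) cs = alternating D cs"
proof -
  have i: "cyc_indeg (\<lambda>a b. D b a) cs v = cyc_outdeg D cs v" for v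
    unfolding cyc_indeg_def cyc_outdeg_def by (simp add: ce_sym)
  have o: "cyc_outdeg (\<lambda>a b. D b a) cs v = cyc_indeg D cs v" for v
    unfolding cyc_indeg_def cyc_outdeg_def by (simp add: ce_sym)
  show ?thesis unfolding alternating_def i o by (simp add: conj_commute)
qed

lemma onlyif:
  assumes q: "q > 0" and p: "3*q+1 \<le> p" and o: "is_orientation p q D"
  shows "\<exists>cs. alternating_odd_cycle p q D cs"
proof (rule ccontr)
  assume NA: "\<not> (\<exists>cs. alternating_odd_cycle p q D cs)"
  define P where "P = 3*q+1"
  have P: "P = 3*q+1" "P \<le> p" using p by (auto simp: P_def)
  define c where "c = (\<lambda>x. D (md P x 0) (md P x q))"
  have cq: "c (x+q) = c x" for x
  proof -
    have e1: "md P (x+q) 0 = md P x q" unfolding md_shift by simp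
    have e2: "md P (x+q) q = md P x (2*q)" unfolding md_shift by (rule md_cong) simp
    have "c (x+q) = D (md P x q) (md P x (2*q))" unfolding c_def using e1 e2 by simp
    then show ?thesis using triM[OF o NA q P, of x] unfolding c_def by simp
  qed
  have cP: "c (x+P) = c x" for x
  proof -
    have "(x + P + q) mod P = ((x+q) + P) mod P" by (rule arg_cong[where f="\<lambda>t. t mod P"]) simp
    also have "\<dots> = (x+q) mod P" by (rule mod_add_self2)
    finally have "(x + P + q) mod P = (x+q) mod P" .
    then show ?thesis unfolding c_def md_def by simp
  qed
  have c1: "c (x+1) = c x" for x
  proof -
    have "c (x+1) = c (x+1+q)" by (rule cq[symmetric])
    also have "\<dots> = c (x+1+q+q)" by (rule cq[symmetric])
    also have "\<dots> = c (x+1+q+q+q)" by (rule cq[symmetric])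
    also have "x+1+q+q+q = x + P" by (simp add: P_def)
    also have "c \<dots> = c x" by (rule cP)
    finally show ?thesis .
  qed
  have cc: "c x = c 0" for x
  proof (induction x)
    case 0 show ?case by simp
  next
    case (Suc x)
    have "c (Suc x) = c x" using c1[of x] by simp
    with Suc show ?case by simp
  qed
  show False
  proof (cases "c 0")
    case True
    have H: "D (md P x 0) (md P x q)" for x
    proof -
      have "c x" using True cc[of x] by simp
      then show ?thesis by (simp add: c_def)
    qed
    show False by (rule core[OF o NA q P H])
  next
    case False
    define D' where "D' = (\<lambda>a b. D b a)"
    have o': "is_orientation p q D'"
      unfolding is_orientation_def D'_def
    proof (intro conjI allI impI)
      fix a b assume "D b a" then have "rcg_adj p q b a" using o unfolding is_orientation_def by blast
      then show "rcg_adj p q a b" by (subst adj_sym)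
    next
      fix a b assume "rcg_adj p q a b" then have "rcg_adj p q b a" by (subst adj_sym)
      then show "D b a = (\<not> D a b)" using o unfolding is_orientation_def by blast
    qed
    have ae: "alternating_odd_cycle p q D' cs \<longleftrightarrow> alternating_odd_cycle p q D cs" for cs
    proof -
      have "alternating D' cs = alternating D cs" unfolding D'_def by (rule alt_conv)
      then show ?thesis unfolding alternating_odd_cycle_def by simp
    qed
    have NA': "\<not> (\<exists>cs. alternating_odd_cycle p q D' cs)"
    proof
      assume "\<exists>cs. alternating_odd_cycle p q D' cs"
      then obtain cs where "alternating_odd_cycle p q D' cs" by blast
      then have "alternating_odd_cycle p q D cs" using ae by blast
      with NA show False by blast
    qed
    have H': "D' (md P x 0) (md P x q)" for x
    proof -
      have "\<not> c x" using False cc[of x] by simp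
      then have "\<not> D (md P x 0) (md P x q)" by (simp add: c_def)
      moreover have "rcg_adj p q (md P x 0) (md P x q)" by (rule adjM[OF P q]) (use q in auto)
      ultimately show ?thesis unfolding D'_def using orient_tot[OF o] by blast
    qed
    show False by (rule core[OF o' NA' q P H'])
  qed
qed

theorem mainTheorem9:
  fixes p q :: nat
  assumes "p > 0" "q > 0" "p \<ge> 2 * q"
  shows "(\<exists>D. is_orientation p q D \<and> \<not> (\<exists>cs. alternating_odd_cycle p q D cs))
           \<longleftrightarrow> (of_nat p :: rat) / of_nat q \<le> 3"
proof -
  have qr: "(of_nat q :: rat) > 0" using assms by simp
  have eq: "((of_nat p :: rat) / of_nat q \<le> 3) \<longleftrightarrow> p \<le> 3*q"
  proof -
    have "((of_nat p :: rat) / of_nat q \<le> 3) \<longleftrightarrow> (of_nat p :: rat) \<le> 3 * of_nat q"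
      using qr by (simp add: divide_le_eq)
    also have "(3::rat) * of_nat q = of_nat (3*q)" by simp
    also have "((of_nat p :: rat) \<le> of_nat (3*q)) \<longleftrightarrow> p \<le> 3*q" by (rule of_nat_le_iff)
    finally show ?thesis .
  qed
  show ?thesis
  proof
    assume "\<exists>D. is_orientation p q D \<and> \<not> (\<exists>cs. alternating_odd_cycle p q D cs)"
    then obtain D where D: "is_orientation p q D" "\<not> (\<exists>cs. alternating_odd_cycle p q D cs)" by blast
    have "p \<le> 3*q"
    proof (rule ccontr)
      assume "\<not> p \<le> 3*q"
      then have "3*q+1 \<le> p" by simp
      from onlyif[OF assms(2) this D(1)] D(2) show False by blast
    qed
    then show "(of_nat p :: rat) / of_nat q \<le> 3" using eq by simp
  next
    assume "(of_nat p :: rat) / of_nat q \<le> 3"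
    then have "p \<le> 3*q" using eq by simp
    then show "\<exists>D. is_orientation p q D \<and> \<not> (\<exists>cs. alternating_odd_cycle p q D cs)"
      using if_dir[OF assms(2)] by blast
  qed
qed

end
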